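(* Let $Q=(q_0,\ldots,q_n)$ be a weights vector and let $\mathbf{v}_0,\ldots,\mathbf{v}_n\in\mathbb{Q}^n$ be vectors generating $\mathbb{Q}^n$ (as a $\mathbb{Q}$-vector space) such that $\sum_{j=0}^n q_j\mathbf{v}_j=0$. Let $L$ be the lattice generated by $\mathbf{v}_0,\ldots,\mathbf{v}_n$ and $L'$ the sublattice generated by $q_0\mathbf{v}_0,\ldots,q_n\mathbf{v}_n$. Then: (a) $[L:L']=\prod_{j=0}^n q_j$; (b) if $\mathbf{e}_1,\ldots,\mathbf{e}_n$ is a basis of $L$, $V=(v_{ij})$ is the $n\times(n+1)$ matrix with $\mathbf{v}_j=\sum_{i=1}^n v_{ij}\mathbf{e}_i$, and $V_j$ denotes the determinant of the matrix obtained from $V$ by deleting its $j$-th column ($0\leq j\leq n$), then there is a fixed $\epsilon\in\{0,1\}$ with $V_j=(-1)^{\epsilon+j}q_j$ for all $j$; (c) for every $j$, $\mathbf{v}_j=d_j\mathbf{n}_j$, where $\mathbf{n}_j$ is the generator of the semigroup $\mathbb{R}_{\geq0}\mathbf{v}_j\cap L$ and $d_j=\gcd(q_0,\ldots,q_{j-1},q_{j+1},\ldots,q_n)$; in particular $L$ is generated by $\mathbf{n}_0,\ldots,\mathbf{n}_n$; moreover $\mathbf{n}_0,\ldots,\mathbf{n}_n$ generate $\mathbb{Q}^n$ and $\sum_{j=0}^n q'_j\mathbf{n}_j=0$, where $Q'=(q'_0,\ldots,q'_n)$ is the reduction of $Q$.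
   Context: A weights vector is an $(n+1)$-tuple $Q=(q_0,\ldots,q_n)$ of positive integers with $\gcd(q_0,\ldots,q_n)=1$. Set $d_j=\gcd(q_0,\ldots,q_{j-1},q_{j+1},\ldots,q_n)$ and $a_j=\mathrm{lcm}(d_0,\ldots,d_{j-1},d_{j+1},\ldots,d_n)$. Then $a_j\mid q_j$, and the reduction of $Q$ is $Q'=(q'_0,\ldots,q'_n)$ with $q'_j=q_j/a_j$. *)

theory Defs
  imports "Jordan_Normal_Form.Determinant"
begin

definition lincomb :: "nat \<Rightarrow> (nat \<Rightarrow> rat) \<Rightarrow> (nat \<Rightarrow> rat vec) \<Rightarrow> nat \<Rightarrow> rat vec" where
  "lincomb d c v m = vec d (\<lambda>i. \<Sum>j<m. c j * (v j $ i))"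

definition int_span :: "nat \<Rightarrow> (nat \<Rightarrow> rat vec) \<Rightarrow> nat \<Rightarrow> rat vec set" where
  "int_span d v m = {lincomb d (\<lambda>j. of_int (c j)) v m | c. True}"

definition generates_Qn :: "nat \<Rightarrow> (nat \<Rightarrow> rat vec) \<Rightarrow> nat \<Rightarrow> bool" where
  "generates_Qn d v m = (\<forall>x \<in> carrier_vec d. \<exists>c. x = lincomb d c v m)"

definition lattice_index :: "rat vec set \<Rightarrow> rat vec set \<Rightarrow> nat" where
  "lattice_index L L' = card {{y \<in> L. y - x \<in> L'} | x. x \<in> L}"

definition is_lattice_basis :: "nat \<Rightarrow> rat vec set \<Rightarrow> (nat \<Rightarrow> rat vec) \<Rightarrow> bool" where
  "is_lattice_basis d L e \<longleftrightarrow>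
     (\<forall>i<d. e i \<in> carrier_vec d) \<and> int_span d e d = L \<and>
     (\<forall>c :: nat \<Rightarrow> int. lincomb d (\<lambda>i. of_int (c i)) e d = 0\<^sub>v d \<longrightarrow> (\<forall>i<d. c i = 0))"

text \<open>w generates the semigroup  R_{>=0} v \<inter> L  (vectors are rational, so the ray
  R_{>=0} v meets Q^d exactly in the rational nonnegative multiples of v).\<close>
definition ray_generator :: "rat vec set \<Rightarrow> rat vec \<Rightarrow> rat vec \<Rightarrow> bool" where
  "ray_generator L v w \<longleftrightarrow>
     {x. (\<exists>t::rat. t \<ge> 0 \<and> x = t \<cdot>\<^sub>v v) \<and> x \<in> L} = {of_nat k \<cdot>\<^sub>v w | k. True}"

definition weights_vector :: "nat \<Rightarrow> (nat \<Rightarrow> nat) \<Rightarrow> bool" where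
  "weights_vector n q \<longleftrightarrow> (\<forall>j\<le>n. q j > 0) \<and> Gcd (q ` {0..n}) = 1"

definition dgcd :: "nat \<Rightarrow> (nat \<Rightarrow> nat) \<Rightarrow> nat \<Rightarrow> nat" where
  "dgcd n q j = Gcd (q ` ({0..n} - {j}))"

definition acoef :: "nat \<Rightarrow> (nat \<Rightarrow> nat) \<Rightarrow> nat \<Rightarrow> nat" where
  "acoef n q j = Lcm (dgcd n q ` ({0..n} - {j}))"

definition reduction :: "nat \<Rightarrow> (nat \<Rightarrow> nat) \<Rightarrow> nat \<Rightarrow> nat" where
  "reduction n q j = q j div acoef n q j"

definition del_col :: "nat \<Rightarrow> (nat \<Rightarrow> nat \<Rightarrow> int) \<Rightarrow> nat \<Rightarrow> int mat" where
  "del_col n V j = mat n n (\<lambda>(i, k). V i (if k < j then k else Suc k))"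

end

theory Submission
  imports Defs
begin



lemma lincomb_carrier[simp]: "lincomb d c u m \<in> carrier_vec d"
  by (simp add: lincomb_def)
lemma dim_lincomb[simp]: "dim_vec (lincomb d c u m) = d"
  by (simp add: lincomb_def)
lemma lincomb_index: "i < d \<Longrightarrow> lincomb d c u m $ i = (\<Sum>j<m. c j * (u j $ i))"
  by (simp add: lincomb_def)

lemma lincomb_cong: "(\<And>j. j < m \<Longrightarrow> c j = c' j) \<Longrightarrow> (\<And>j. j < m \<Longrightarrow> u j = u' j)
  \<Longrightarrow> lincomb d c u m = lincomb d c' u' m"
  unfolding lincomb_def by (intro eq_vecI) auto

lemma lincomb_add: "lincomb d c u m + lincomb d c' u m = lincomb d (\<lambda>j. c j + c' j) u m"
  unfolding lincomb_def by (intro eq_vecI) (auto simp: sum.distrib algebra_simps)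

lemma lincomb_diff: "lincomb d c u m - lincomb d c' u m = lincomb d (\<lambda>j. c j - c' j) u m"
  unfolding lincomb_def by (intro eq_vecI) (auto simp: sum_subtractf algebra_simps)

lemma lincomb_smult: "a \<cdot>\<^sub>v lincomb d c u m = lincomb d (\<lambda>j. a * c j) u m"
  unfolding lincomb_def by (intro eq_vecI) (auto simp: sum_distrib_left algebra_simps)

lemma lincomb_zero: "(\<And>j. j < m \<Longrightarrow> c j = 0) \<Longrightarrow> lincomb d c u m = 0\<^sub>v d"
  unfolding lincomb_def by (intro eq_vecI) auto

lemma lincomb_single: assumes "j < m" "u j \<in> carrier_vec d"
  shows "lincomb d (\<lambda>k. if k = j then 1 else 0) u m = u j"
proof (rule eq_vecI)
  fix i assume i: "i < dim_vec (u j)"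
  have "(\<Sum>k<m. (if k = j then 1 else 0) * (u k $ i)) = (\<Sum>k<m. if k = j then u j $ i else 0)"
    by (rule sum.cong) auto
  then show "lincomb d (\<lambda>k. if k = j then 1 else 0) u m $ i = u j $ i"
    using i assms by (simp add: lincomb_def)
qed (use assms in auto)

lemma lincomb_scaled: assumes "\<And>j. j < m \<Longrightarrow> u j \<in> carrier_vec d"
  shows "lincomb d c (\<lambda>j. a j \<cdot>\<^sub>v u j) m = lincomb d (\<lambda>j. c j * a j) u m"
  unfolding lincomb_def
proof (rule eq_vecI)
  fix i assume "i < dim_vec (vec d (\<lambda>i. \<Sum>j<m. c j * a j * (u j $ i)))"
  then have i: "i < d" by simp
  have "(a j \<cdot>\<^sub>v u j) $ i = a j * u j $ i" if "j < m" for j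
    using assms[OF that] i by auto
  then show "vec d (\<lambda>i. \<Sum>j<m. c j * (a j \<cdot>\<^sub>v u j) $ i) $ i = vec d (\<lambda>i. \<Sum>j<m. c j * a j * (u j $ i)) $ i"
    using i by (auto intro!: sum.cong)
qed auto

lemma lincomb_lincomb:
  "lincomb d c (\<lambda>j. lincomb d (b j) u m') m = lincomb d (\<lambda>k. \<Sum>j<m. c j * b j k) u m'"
  unfolding lincomb_def
  by (intro eq_vecI) (auto simp: sum_distrib_left sum_distrib_right sum.swap[of _ "{..<m}"] mult.assoc)




lemma lincomb_mat: "lincomb n c v m = mat n m (\<lambda>(i,j). v j $ i) *\<^sub>v vec m c"
  by (intro eq_vecI) (auto simp: lincomb_def scalar_prod_def lessThan_atLeast0 mult.commute intro!: sum.cong)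

lemma smult_mat_mult_vec: "B \<in> carrier_mat nr nc \<Longrightarrow> c \<in> carrier_vec nc \<Longrightarrow> (a \<cdot>\<^sub>m B) *\<^sub>v c = a \<cdot>\<^sub>v (B *\<^sub>v c)"
  by (intro eq_vecI) (auto simp: scalar_prod_def sum_distrib_left mult.assoc)

context
  fixes n :: nat and q :: "nat \<Rightarrow> nat" and v :: "nat \<Rightarrow> rat vec"
  assumes Q: "weights_vector n q"
    and dim: "\<forall>j\<le>n. v j \<in> carrier_vec n"
    and gen: "generates_Qn n v (Suc n)"
    and rel: "lincomb n (\<lambda>j. of_nat (q j)) v (Suc n) = 0\<^sub>v n"
begin

lemma qpos: "j \<le> n \<Longrightarrow> q j > 0" using Q by (auto simp: weights_vector_def)

lemma KQ: assumes c: "lincomb n c v (Suc n) = 0\<^sub>v n" shows "\<exists>s. \<forall>j\<le>n. c j = s * of_nat (q j)"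
proof -
  define A where "A = mat n (Suc n) (\<lambda>(i,j). v j $ i)"
  have "\<forall>i<n. \<exists>b. unit_vec n i = lincomb n b v (Suc n)" using gen by (auto simp: generates_Qn_def)
  then obtain b where b: "\<And>i. i<n \<Longrightarrow> unit_vec n i = lincomb n (b i) v (Suc n)" by metis
  define N where "N = mat (Suc n) (Suc n) (\<lambda>(j,k). if k < n then b k j else of_nat (q j) :: rat)"
  have A: "A \<in> carrier_mat n (Suc n)" and N: "N \<in> carrier_mat (Suc n) (Suc n)"
    by (auto simp: A_def N_def)
  have AN: "A * N = mat n (Suc n) (\<lambda>(i,k). if k = i then 1 else 0)"
  proof (rule eq_matI)
    fix i k assume i: "i < dim_row (mat n (Suc n) (\<lambda>(i,k). if k = i then 1 else (0::rat)))"
      and k: "k < dim_col (mat n (Suc n) (\<lambda>(i,k). if k = i then 1 else (0::rat)))"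
    then have i: "i < n" and k: "k < Suc n" by auto
    have e: "(A * N) $$ (i,k) = (\<Sum>j<Suc n. N $$ (j,k) * v j $ i)"
      using i k by (auto simp: A_def N_def scalar_prod_def lessThan_atLeast0 mult.commute intro!: sum.cong)
    show "(A * N) $$ (i,k) = mat n (Suc n) (\<lambda>(i,k). if k = i then 1 else 0) $$ (i,k)"
    proof (cases "k < n")
      case True
      have "(A * N) $$ (i,k) = lincomb n (b k) v (Suc n) $ i"
        unfolding e using i k True by (auto simp: lincomb_index N_def intro!: sum.cong)
      also have "\<dots> = unit_vec n k $ i" using b[OF True] by simp
      finally show ?thesis using i k True by auto
    next
      case False
      then have kn: "k = n" using k by auto
      have "(A * N) $$ (i,k) = lincomb n (\<lambda>j. of_nat (q j)) v (Suc n) $ i"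
        unfolding e using i k kn by (auto simp: lincomb_index N_def intro!: sum.cong)
      also have "\<dots> = 0" using rel i by simp
      finally show ?thesis using i k kn by auto
    qed
  qed (auto simp: A_def N_def)
  have ANx: "(A * N) *\<^sub>v x = vec n (\<lambda>i. x $ i)" if x: "x \<in> carrier_vec (Suc n)" for x
  proof (rule eq_vecI)
    fix i assume "i < dim_vec (vec n (\<lambda>i. x $ i))"
    then have i: "i < n" by simp
    have "((A * N) *\<^sub>v x) $ i = (\<Sum>k<Suc n. (if k = i then 1 else 0) * x $ k)"
      unfolding AN using i x by (auto simp: scalar_prod_def lessThan_atLeast0 intro!: sum.cong)
    also have "\<dots> = (\<Sum>k<Suc n. if k = i then x $ i else 0)" by (rule sum.cong) auto
    also have "\<dots> = x $ i" using i by simp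
    finally show "((A * N) *\<^sub>v x) $ i = vec n (\<lambda>i. x $ i) $ i" using i by simp
  qed (simp add: AN)
  have Nxj: "(N *\<^sub>v x) $ j = (\<Sum>k<n. b k j * x $ k) + of_nat (q j) * x $ n"
    if x: "x \<in> carrier_vec (Suc n)" and j: "j < Suc n" for x j
    using x j by (auto simp: N_def scalar_prod_def lessThan_atLeast0[symmetric] intro!: sum.cong)
  have detN: "det N \<noteq> 0"
  proof
    assume "det N = 0"
    then obtain x where x: "x \<in> carrier_vec (Suc n)" "x \<noteq> 0\<^sub>v (Suc n)" "N *\<^sub>v x = 0\<^sub>v (Suc n)"
      using det_0_iff_vec_prod_zero_field[OF N] by auto
    have "(A * N) *\<^sub>v x = A *\<^sub>v (N *\<^sub>v x)" using A N x by (simp add: assoc_mult_mat_vec)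
    also have "\<dots> = 0\<^sub>v n" using x A by (intro eq_vecI) (auto simp: scalar_prod_def)
    finally have xi: "\<And>i. i < n \<Longrightarrow> x $ i = 0" using ANx[OF x(1)]
      by (metis index_vec index_zero_vec(1))
    have "(N *\<^sub>v x) $ 0 = of_nat (q 0) * x $ n" using Nxj[OF x(1), of 0] xi by simp
    then have "x $ n = 0" using x(3) qpos[of 0] by simp
    then have "x = 0\<^sub>v (Suc n)" using xi x(1)
      by (intro eq_vecI) (auto simp: less_Suc_eq)
    with x(2) show False by simp
  qed
  define c' where "c' = vec (Suc n) c"
  have c'c: "c' \<in> carrier_vec (Suc n)" by (simp add: c'_def)
  have Ac': "A *\<^sub>v c' = 0\<^sub>v n" using c by (simp add: lincomb_mat A_def c'_def)
  define x where "x = (1 / det N) \<cdot>\<^sub>v (adj_mat N *\<^sub>v c')"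
  have xc: "x \<in> carrier_vec (Suc n)" using adj_mat(1)[OF N] c'c by (simp add: x_def)
  have "N *\<^sub>v x = (1 / det N) \<cdot>\<^sub>v ((N * adj_mat N) *\<^sub>v c')"
    unfolding x_def using adj_mat(1)[OF N] N c'c
    by (simp add: mult_mat_vec assoc_mult_mat_vec)
  also have "\<dots> = c'" unfolding adj_mat(2)[OF N] using detN c'c
    by (simp add: smult_mat_mult_vec[of _ "Suc n" "Suc n"] smult_smult_assoc)
  finally have Nx: "N *\<^sub>v x = c'" .
  have "(A * N) *\<^sub>v x = A *\<^sub>v (N *\<^sub>v x)" using A N xc by (simp add: assoc_mult_mat_vec)
  also have "\<dots> = 0\<^sub>v n" using Nx Ac' by simp
  finally have xi: "\<And>i. i < n \<Longrightarrow> x $ i = 0" using ANx[OF xc]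
    by (metis index_vec index_zero_vec(1))
  show ?thesis
  proof (intro exI allI impI)
    fix j assume j: "j \<le> n"
    have "c j = c' $ j" using j by (simp add: c'_def)
    also have "\<dots> = of_nat (q j) * x $ n" unfolding Nx[symmetric] using Nxj[OF xc, of j] j xi by simp
    finally show "c j = x $ n * of_nat (q j)" by simp
  qed
qed

end



lemma Ints_mult_Gcd: fixes s :: rat and f :: "nat \<Rightarrow> nat"
  assumes "\<forall>k\<in>J. s * of_nat (f k) \<in> \<int>" shows "s * of_nat (Gcd (f ` J)) \<in> \<int>"
proof -
  obtain a b where qs: "quotient_of s = (a,b)" by (cases "quotient_of s")
  have b0: "b > 0" using quotient_of_denom_pos[OF qs] .
  have cop: "coprime b a" using quotient_of_coprime[OF qs] by (simp add: coprime_commute)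
  have s: "s = of_int a / of_int b" using quotient_of_div[OF qs] .
  have "nat b dvd f k" if k: "k \<in> J" for k
  proof -
    from assms k obtain m where m: "s * of_nat (f k) = of_int m" by (auto elim: Ints_cases)
    then have "of_int a * of_nat (f k) = (of_int (m * b) :: rat)" using b0 unfolding s
      by (simp add: field_simps)
    then have "a * int (f k) = m * b" by (metis of_int_eq_iff of_int_mult of_int_of_nat_eq)
    then have "b dvd a * int (f k)" by simp
    then have "b dvd int (f k)" using cop coprime_dvd_mult_right_iff by blast
    then show ?thesis using b0 by (metis int_dvd_int_iff nat_0_le order_less_imp_le)
  qed
  then have "nat b dvd Gcd (f ` J)" by (auto intro: Gcd_greatest)
  then obtain g where g: "Gcd (f ` J) = nat b * g" by blast
  have "s * of_nat (Gcd (f ` J)) = of_int (a * int g)" unfolding g s using b0 by simp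
  then show ?thesis by simp
qed

context
  fixes n :: nat and q :: "nat \<Rightarrow> nat" and v :: "nat \<Rightarrow> rat vec"
  assumes Q: "weights_vector n q"
    and dim: "\<forall>j\<le>n. v j \<in> carrier_vec n"
    and gen: "generates_Qn n v (Suc n)"
    and rel: "lincomb n (\<lambda>j. of_nat (q j)) v (Suc n) = 0\<^sub>v n"
begin

lemmas KQ' = KQ[OF Q dim gen rel]
lemmas qpos' = qpos[OF Q dim gen rel]

lemma KZ: assumes c: "lincomb n (\<lambda>j. of_int (c j)) v (Suc n) = 0\<^sub>v n"
  shows "\<exists>t. \<forall>j\<le>n. c j = t * int (q j)"
proof -
  obtain s where s: "\<And>j. j \<le> n \<Longrightarrow> of_int (c j) = (s::rat) * of_nat (q j)" using KQ'[OF c] by auto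
  have "\<forall>k\<in>{0..n}. s * of_nat (q k) \<in> \<int>" using s by (metis Ints_of_int atLeastAtMost_iff)
  from Ints_mult_Gcd[OF this] Q have "s \<in> \<int>" by (simp add: weights_vector_def)
  then obtain t where t: "s = of_int t" by (auto elim: Ints_cases)
  show ?thesis
  proof (intro exI allI impI)
    fix j assume "j \<le> n"
    from s[OF this] show "c j = t * int (q j)" unfolding t by (metis of_int_eq_iff of_int_mult of_int_of_nat_eq)
  qed
qed

end



context
  fixes n :: nat and q :: "nat \<Rightarrow> nat" and v :: "nat \<Rightarrow> rat vec"
  assumes Q: "weights_vector n q"
    and dim: "\<forall>j\<le>n. v j \<in> carrier_vec n"
    and gen: "generates_Qn n v (Suc n)"
    and rel: "lincomb n (\<lambda>j. of_nat (q j)) v (Suc n) = 0\<^sub>v n"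
begin

lemmas KZ' = KZ[OF Q dim gen rel]

lemma Lp_eq: "lincomb n (\<lambda>j. of_int (d j)) (\<lambda>j. of_nat (q j) \<cdot>\<^sub>v v j) (Suc n)
   = lincomb n (\<lambda>j. of_int (d j * int (q j))) v (Suc n)"
  using dim by (subst lincomb_scaled) (auto intro!: lincomb_cong)

lemma rel_char:
  "lincomb n (\<lambda>j. of_int (c j)) v (Suc n) - lincomb n (\<lambda>j. of_int (c' j)) v (Suc n)
     \<in> int_span n (\<lambda>j. of_nat (q j) \<cdot>\<^sub>v v j) (Suc n)
   \<longleftrightarrow> (\<forall>j\<le>n. int (q j) dvd c j - c' j)"
  (is "?l \<longleftrightarrow> ?r")
proof
  assume ?l
  then obtain d where d: "lincomb n (\<lambda>j. of_int (c j)) v (Suc n) - lincomb n (\<lambda>j. of_int (c' j)) v (Suc n)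
     = lincomb n (\<lambda>j. of_int (d j * int (q j))) v (Suc n)"
    unfolding int_span_def Lp_eq by auto
  then have "lincomb n (\<lambda>j. of_int (c j - c' j - d j * int (q j))) v (Suc n) = 0\<^sub>v n"
  proof -
    have "lincomb n (\<lambda>j. of_int (c j - c' j - d j * int (q j))) v (Suc n)
      = (lincomb n (\<lambda>j. of_int (c j)) v (Suc n) - lincomb n (\<lambda>j. of_int (c' j)) v (Suc n))
        - lincomb n (\<lambda>j. of_int (d j * int (q j))) v (Suc n)"
      by (simp add: lincomb_diff)
    also have "\<dots> = 0\<^sub>v n" unfolding d by (intro eq_vecI) auto
    finally show ?thesis .
  qed
  from KZ'[OF this] obtain t where t: "\<And>j. j \<le> n \<Longrightarrow> c j - c' j - d j * int (q j) = t * int (q j)" by auto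
  show ?r
  proof (intro allI impI)
    fix j assume "j \<le> n"
    from t[OF this] have "c j - c' j = (t + d j) * int (q j)" by (simp add: algebra_simps)
    then show "int (q j) dvd c j - c' j" by simp
  qed
next
  assume r: ?r
  define d where "d j = (c j - c' j) div int (q j)" for j
  have "lincomb n (\<lambda>j. of_int (c j)) v (Suc n) - lincomb n (\<lambda>j. of_int (c' j)) v (Suc n)
     = lincomb n (\<lambda>j. of_int (d j * int (q j))) v (Suc n)"
    unfolding lincomb_diff
  proof (rule lincomb_cong)
    fix j assume "j < Suc n"
    with r have "int (q j) dvd c j - c' j" by auto
    then show "rat_of_int (c j) - rat_of_int (c' j) = rat_of_int (d j * int (q j))"
      unfolding d_def by (metis dvd_div_mult_self of_int_diff)
  qed auto
  then show ?l unfolding int_span_def Lp_eq by auto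
qed

end



context
  fixes n :: nat and q :: "nat \<Rightarrow> nat" and v :: "nat \<Rightarrow> rat vec"
  assumes Q: "weights_vector n q"
    and dim: "\<forall>j\<le>n. v j \<in> carrier_vec n"
    and gen: "generates_Qn n v (Suc n)"
    and rel: "lincomb n (\<lambda>j. of_nat (q j)) v (Suc n) = 0\<^sub>v n"
begin

lemmas rel_char' = rel_char[OF Q dim gen rel]

definition coset_of where "coset_of x = {y \<in> int_span n v (Suc n). y - x \<in> int_span n (\<lambda>j. of_nat (q j) \<cdot>\<^sub>v v j) (Suc n)}"

abbreviation phi where "phi c \<equiv> lincomb n (\<lambda>j. of_int (c j)) v (Suc n)"

lemma coset_mem: "phi e \<in> coset_of (phi a) \<longleftrightarrow> (\<forall>j\<le>n. int (q j) dvd e j - a j)"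
  unfolding coset_of_def rel_char'[symmetric] by (auto simp: int_span_def)

lemma coset_eq: "coset_of (phi c) = coset_of (phi c') \<longleftrightarrow> (\<forall>j\<le>n. int (q j) dvd c j - c' j)"
proof
  assume e: "coset_of (phi c) = coset_of (phi c')"
  have "phi c \<in> coset_of (phi c)" unfolding coset_mem by simp
  then have "phi c \<in> coset_of (phi c')" using e by simp
  then show "\<forall>j\<le>n. int (q j) dvd c j - c' j" unfolding coset_mem .
next
  assume r: "\<forall>j\<le>n. int (q j) dvd c j - c' j"
  have *: "coset_of (phi a) \<subseteq> coset_of (phi b)" if ab: "\<forall>j\<le>n. int (q j) dvd a j - b j" for a b
  proof
    fix y assume yin: "y \<in> coset_of (phi a)"
    then obtain e where y: "y = phi e"
      unfolding coset_of_def int_span_def by auto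
    have ea: "\<forall>j\<le>n. int (q j) dvd e j - a j" using yin unfolding y coset_mem .
    have "\<forall>j\<le>n. int (q j) dvd e j - b j"
    proof (intro allI impI)
      fix j assume j: "j \<le> n"
      have "e j - b j = (e j - a j) + (a j - b j)" by simp
      then show "int (q j) dvd e j - b j" using ea ab j by (metis dvd_add)
    qed
    then show "y \<in> coset_of (phi b)" unfolding y coset_mem .
  qed
  have "\<forall>j\<le>n. int (q j) dvd c' j - c j" using r by (metis dvd_diff_commute)
  with *[OF r] *[OF this] show "coset_of (phi c) = coset_of (phi c')" by blast
qed

lemma part_a:
  "lattice_index (int_span n v (Suc n)) (int_span n (\<lambda>j. of_nat (q j) \<cdot>\<^sub>v v j) (Suc n)) = (\<Prod>j\<le>n. q j)"
proof -
  define R where "R = PiE {..n} (\<lambda>j. {0..<int (q j)})"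
  define F where "F r = coset_of (phi r)" for r
  have set_eq: "{{y \<in> int_span n v (Suc n). y - x \<in> int_span n (\<lambda>j. of_nat (q j) \<cdot>\<^sub>v v j) (Suc n)} | x. x \<in> int_span n v (Suc n)}
     = F ` R"
  proof (intro equalityI subsetI)
    fix C assume "C \<in> {{y \<in> int_span n v (Suc n). y - x \<in> int_span n (\<lambda>j. of_nat (q j) \<cdot>\<^sub>v v j) (Suc n)} | x. x \<in> int_span n v (Suc n)}"
    then obtain x where "C = coset_of x" "x \<in> int_span n v (Suc n)" unfolding coset_of_def by blast
    then obtain c where C: "C = coset_of (phi c)" unfolding int_span_def by blast
    define r where "r = restrict (\<lambda>j. c j mod int (q j)) {..n}"
    have "r \<in> R" unfolding r_def R_def using qpos[OF Q dim gen rel] by auto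
    moreover have "F r = C" unfolding F_def C coset_eq r_def
      by (auto simp: mod_eq_dvd_iff[symmetric])
    ultimately show "C \<in> F ` R" by blast
  next
    fix C assume "C \<in> F ` R"
    then obtain r where "C = coset_of (phi r)" unfolding F_def by auto
    moreover have "phi r \<in> int_span n v (Suc n)" unfolding int_span_def by blast
    ultimately show "C \<in> {{y \<in> int_span n v (Suc n). y - x \<in> int_span n (\<lambda>j. of_nat (q j) \<cdot>\<^sub>v v j) (Suc n)} | x. x \<in> int_span n v (Suc n)}"
      unfolding coset_of_def by blast
  qed
  have inj: "inj_on F R"
  proof (rule inj_onI)
    fix r r' assume r: "r \<in> R" and r': "r' \<in> R" and e: "F r = F r'"
    show "r = r'"
    proof (rule PiE_ext[OF r[unfolded R_def] r'[unfolded R_def]])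
      fix j assume j: "j \<in> {..n}"
      from e j have "int (q j) dvd r j - r' j" unfolding F_def coset_eq by auto
      then have "r j mod int (q j) = r' j mod int (q j)" by (simp add: mod_eq_dvd_iff)
      moreover have "r j \<in> {0..<int (q j)}" "r' j \<in> {0..<int (q j)}" using r r' j unfolding R_def by auto
      ultimately show "r j = r' j" by simp
    qed
  qed
  have "lattice_index (int_span n v (Suc n)) (int_span n (\<lambda>j. of_nat (q j) \<cdot>\<^sub>v v j) (Suc n)) = card R"
    unfolding lattice_index_def set_eq using card_image[OF inj] .
  also have "\<dots> = (\<Prod>j\<le>n. q j)" unfolding R_def by (simp add: card_PiE)
  finally show ?thesis .
qed

end



lemma sum_delta0: "(\<Sum>j<Suc n. (if j = 0 then (1::'a::comm_ring_1) else 0) * f j) = f 0"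
proof -
  have "(\<Sum>j<Suc n. (if j = 0 then (1::'a) else 0) * f j) = (\<Sum>j<Suc n. if j = 0 then f 0 else 0)"
    by (rule sum.cong) auto
  then show ?thesis by simp
qed

lemma del_col_carrier: "del_col n V j \<in> carrier_mat n n" by (simp add: del_col_def)

lemma det_laplace_last:
  "det (mat (Suc n) (Suc n) (\<lambda>(i,j). if i < n then V i j else y j))
    = (\<Sum>j<Suc n. y j * ((-1)^n * ((-1)^j * det (del_col n V j))))"
proof -
  define M where "M = mat (Suc n) (Suc n) (\<lambda>(i,j). if i < n then V i j else y j)"
  have M: "M \<in> carrier_mat (Suc n) (Suc n)" by (simp add: M_def)
  have del: "mat_delete M n j = del_col n V j" if "j < Suc n" for j
    by (rule eq_matI) (auto simp: M_def mat_delete_def del_col_def)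
  have Mn: "M $$ (n,j) = y j" if "j < Suc n" for j using that by (simp add: M_def)
  have "det M = (\<Sum>j<Suc n. M $$ (n,j) * cofactor M n j)"
    by (rule laplace_expansion_row[OF M]) simp
  also have "\<dots> = (\<Sum>j<Suc n. y j * ((-1)^n * ((-1)^j * det (del_col n V j))))"
    by (rule sum.cong) (auto simp: cofactor_def del Mn power_add)
  finally show ?thesis unfolding M_def .
qed

context
  fixes n :: nat and q :: "nat \<Rightarrow> nat" and v :: "nat \<Rightarrow> rat vec"
  assumes Q: "weights_vector n q"
    and dim: "\<forall>j\<le>n. v j \<in> carrier_vec n"
    and gen: "generates_Qn n v (Suc n)"
    and rel: "lincomb n (\<lambda>j. of_nat (q j)) v (Suc n) = 0\<^sub>v n"
begin

lemma part_b:
  assumes basis: "is_lattice_basis n (int_span n v (Suc n)) e"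
    and Vv: "\<forall>j\<le>n. v j = lincomb n (\<lambda>i. of_int (V i j)) e n"
  shows "\<exists>\<epsilon>\<in>{0,1::nat}. \<forall>j\<le>n. det (del_col n V j) = (-1) ^ (\<epsilon> + j) * int (q j)"
proof -
  have ecar: "\<And>i. i < n \<Longrightarrow> e i \<in> carrier_vec n" and span: "int_span n e n = int_span n v (Suc n)"
    and indep: "\<And>c. lincomb n (\<lambda>i. of_int (c i)) e n = 0\<^sub>v n \<Longrightarrow> \<forall>i<n. c i = 0"
    using basis unfolding is_lattice_basis_def by auto
  define Vc where "Vc i c = (\<Sum>j<Suc n. V i j * c j)" for i and c :: "nat \<Rightarrow> int"
  have b1: "lincomb n (\<lambda>j. of_int (c j)) v (Suc n) = lincomb n (\<lambda>i. of_int (Vc i c)) e n" for c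
  proof (rule eq_vecI)
    fix k assume "k < dim_vec (lincomb n (\<lambda>i. of_int (Vc i c)) e n)"
    then have k: "k < n" by simp
    have vk: "v j $ k = (\<Sum>i<n. of_int (V i j) * e i $ k)" if "j < Suc n" for j
      using Vv that k by (auto simp: lincomb_index)
    have "lincomb n (\<lambda>j. of_int (c j)) v (Suc n) $ k = (\<Sum>j<Suc n. of_int (c j) * (\<Sum>i<n. of_int (V i j) * e i $ k))"
      using k vk by (simp add: lincomb_index)
    also have "\<dots> = (\<Sum>i<n. \<Sum>j<Suc n. of_int (c j) * (of_int (V i j) * e i $ k))"
      unfolding sum_distrib_left by (rule sum.swap)
    also have "\<dots> = (\<Sum>i<n. of_int (Vc i c) * e i $ k)"
      by (rule sum.cong[OF refl]) (simp add: Vc_def of_int_sum sum_distrib_left sum_distrib_right mult_ac del: sum.lessThan_Suc)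
    also have "\<dots> = lincomb n (\<lambda>i. of_int (Vc i c)) e n $ k" using k by (simp add: lincomb_index)
    finally show "lincomb n (\<lambda>j. of_int (c j)) v (Suc n) $ k = lincomb n (\<lambda>i. of_int (Vc i c)) e n $ k" .
  qed simp
  have b2: "lincomb n (\<lambda>j. of_int (c j)) v (Suc n) = 0\<^sub>v n \<longleftrightarrow> (\<forall>i<n. Vc i c = 0)" for c
    unfolding b1 using indep[of "\<lambda>i. Vc i c"] by (auto intro: lincomb_zero)
  have b3: "\<exists>c. \<forall>k<n. Vc k c = (if k = i then 1 else 0)" if i: "i < n" for i
  proof -
    have ei: "e i = lincomb n (\<lambda>k. of_int (if k = i then 1 else 0)) e n"
      using lincomb_single[of i n e n, OF i ecar[OF i]] by (simp add: if_distrib cong: if_cong)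
    then have "e i \<in> int_span n e n" unfolding int_span_def
      by (intro CollectI exI[of _ "\<lambda>k. if k = i then 1 else (0::int)"]) simp
    then have "e i \<in> int_span n v (Suc n)" using span by simp
    then obtain c where c: "e i = lincomb n (\<lambda>j. of_int (c j)) v (Suc n)" unfolding int_span_def by blast
    have "lincomb n (\<lambda>k. of_int (Vc k c - (if k = i then 1 else 0))) e n
        = lincomb n (\<lambda>j. of_int (c j)) v (Suc n) - lincomb n (\<lambda>k. of_int (if k = i then 1 else 0)) e n"
      unfolding b1 by (simp add: lincomb_diff)
    also have "\<dots> = 0\<^sub>v n" unfolding c[symmetric]
      using ei ecar[OF i] by (metis carrier_vecD minus_cancel_vec) 
    finally have "\<forall>k<n. Vc k c - (if k = i then 1 else 0) = 0" by (rule indep)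
    then have "\<forall>k<n. Vc k c = (if k = i then 1 else 0)" by auto
    then show ?thesis by blast
  qed
  then obtain C where C: "\<And>i k. i < n \<Longrightarrow> k < n \<Longrightarrow> Vc k (C i) = (if k = i then 1 else 0)" by metis
  define w where "w j = (-1)^j * det (del_col n V j)" for j
  have Vw: "Vc i w = 0" if i: "i < n" for i
  proof -
    define M where "M = mat (Suc n) (Suc n) (\<lambda>(i',j). if i' < n then V i' j else V i j)"
    have "det M = 0"
      by (rule det_identical_rows[of M "Suc n" i n]) (use i in \<open>auto simp: M_def\<close>)
    moreover have "det M = (-1)^n * Vc i w" unfolding M_def det_laplace_last
      by (simp add: Vc_def w_def sum_distrib_left mult_ac del: sum.lessThan_Suc)
    ultimately show ?thesis by simp
  qed
  then have "lincomb n (\<lambda>j. of_int (w j)) v (Suc n) = 0\<^sub>v n" using b2 by simp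
  from KZ[OF Q dim gen rel this] obtain t where t: "\<And>j. j \<le> n \<Longrightarrow> w j = t * int (q j)" by auto
  have Vq: "Vc i (\<lambda>j. int (q j)) = 0" if "i < n" for i
    using rel b2[of "\<lambda>j. int (q j)"] that by simp
  define y0 where "y0 j = (if j = 0 then 1 else 0 :: int)" for j :: nat
  define M where "M = mat (Suc n) (Suc n) (\<lambda>(i,j). if i < n then V i j else y0 j)"
  define N where "N = mat (Suc n) (Suc n) (\<lambda>(j,k). if k < n then C k j else int (q j))"
  have Mc: "M \<in> carrier_mat (Suc n) (Suc n)" and Nc: "N \<in> carrier_mat (Suc n) (Suc n)"
    by (auto simp: M_def N_def)
  have MN: "(M * N) $$ (i,k) = (if i < n then (if k = i then 1 else 0) else N $$ (0,k))"
    if i: "i < Suc n" and k: "k < Suc n" for i k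
  proof -
    have "(M * N) $$ (i,k) = (\<Sum>j<Suc n. M $$ (i,j) * N $$ (j,k))"
      using i k Mc Nc by (auto simp: scalar_prod_def lessThan_atLeast0 intro!: sum.cong)
    also have "\<dots> = (if i < n then (if k = i then 1 else 0) else N $$ (0,k))"
    proof (cases "i < n")
      case True
      show ?thesis
      proof (cases "k < n")
        case True2: True
        have "(\<Sum>j<Suc n. M $$ (i,j) * N $$ (j,k)) = Vc i (C k)"
          unfolding Vc_def using True True2 by (auto simp: M_def N_def intro!: sum.cong)
        then show ?thesis using C True True2 by simp
      next
        case False
        then have kn: "k = n" using k by simp
        have "(\<Sum>j<Suc n. M $$ (i,j) * N $$ (j,k)) = Vc i (\<lambda>j. int (q j))"
          unfolding Vc_def using True kn by (auto simp: M_def N_def intro!: sum.cong)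
        then show ?thesis using Vq True kn by simp
      qed
    next
      case False
      then have "i = n" using i by simp
      then have "(\<Sum>j<Suc n. M $$ (i,j) * N $$ (j,k)) = (\<Sum>j<Suc n. if j = 0 then N $$ (0,k) else 0)"
        by (intro sum.cong) (auto simp: M_def y0_def)
      also have "\<dots> = N $$ (0,k)" by simp
      finally show ?thesis using False by simp
    qed
    finally show ?thesis .
  qed
  have MNc: "M * N \<in> carrier_mat (Suc n) (Suc n)" using Mc Nc by simp
  have "det (M * N) = prod_list (diag_mat (M * N))"
    by (rule det_lower_triangular[OF _ MNc]) (simp add: MN)
  also have "diag_mat (M * N) = map (\<lambda>i. (M * N) $$ (i,i)) [0..<n] @ [(M * N) $$ (n,n)]"
    using Mc by (simp add: diag_mat_def)
  also have "map (\<lambda>i. (M * N) $$ (i,i)) [0..<n] = map (\<lambda>i. 1) [0..<n]"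
    by (rule map_cong) (auto simp: MN)
  also have "(M * N) $$ (n,n) = int (q 0)" using MN[of n n] by (simp add: N_def)
  finally have detMN: "det (M * N) = int (q 0)" by (simp add: map_replicate_const)
  have "det M = (-1)^n * w 0" unfolding M_def det_laplace_last
    unfolding y0_def sum_delta0 by (simp add: w_def)
  also have "\<dots> = (-1)^n * t * int (q 0)" using t[of 0] by simp
  finally have "(-1)^n * t * int (q 0) * det N = int (q 0)"
    using detMN det_mult[OF Mc Nc] by simp
  then have "t * ((-1)^n * det N) = 1" using qpos[OF Q dim gen rel, of 0] by (simp add: mult_ac)
  then have tpm: "t = 1 \<or> t = -1" by (rule pos_zmult_eq_1_iff_lemma)
  have D: "det (del_col n V j) = (-1)^j * t * int (q j)" if "j \<le> n" for j
  proof -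
    have "det (del_col n V j) = (-1)^j * w j" by (simp add: w_def)
    then show ?thesis using t[OF that] by simp
  qed
  show ?thesis
  proof (cases "t = 1")
    case True
    show ?thesis by (rule bexI[of _ 0]) (use D True in auto)
  next
    case False
    then have "t = -1" using tpm by simp
    then show ?thesis by (intro bexI[of _ 1]) (use D in auto)
  qed
qed

end



context
  fixes n :: nat and q :: "nat \<Rightarrow> nat"
  assumes Q: "weights_vector n q" and n0: "0 < n"
begin

lemma qp: "j \<le> n \<Longrightarrow> q j > 0" using Q by (auto simp: weights_vector_def)
lemma G1: "Gcd (q ` {0..n}) = 1" using Q by (auto simp: weights_vector_def)

lemma d_dvd: "k \<le> n \<Longrightarrow> k \<noteq> j \<Longrightarrow> dgcd n q j dvd q k"
  unfolding dgcd_def by (rule Gcd_dvd) auto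

lemma d_pos: assumes "j \<le> n" shows "dgcd n q j > 0"
proof -
  define k where "k = (if j = 0 then 1 else 0::nat)"
  have k: "k \<le> n" "k \<noteq> j" using n0 by (auto simp: k_def)
  have "dgcd n q j dvd q k" using d_dvd[OF k] .
  with qp[OF k(1)] show ?thesis by (cases "dgcd n q j = 0") auto
qed

lemma d_cop: assumes "j \<le> n" "k \<le> n" "j \<noteq> k" shows "coprime (dgcd n q j) (dgcd n q k)"
proof -
  have "gcd (dgcd n q j) (dgcd n q k) dvd Gcd (q ` {0..n})"
  proof (rule Gcd_greatest)
    fix b assume "b \<in> q ` {0..n}"
    then obtain i where i: "i \<le> n" "b = q i" by auto
    show "gcd (dgcd n q j) (dgcd n q k) dvd b"
    proof (cases "i = j")
      case True
      then have "dgcd n q k dvd q i" using d_dvd[of i k] i assms by auto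
      then show ?thesis using i by (metis dvd_trans gcd_dvd2)
    next
      case False
      then have "dgcd n q j dvd q i" using d_dvd[of i j] i by auto
      then show ?thesis using i by (metis dvd_trans gcd_dvd1)
    qed
  qed
  then show ?thesis unfolding G1 by (simp add: coprime_iff_gcd_eq_1)
qed

lemma dq_cop: assumes "j \<le> n" shows "coprime (dgcd n q j) (q j)"
proof -
  have "gcd (dgcd n q j) (q j) dvd Gcd (q ` {0..n})"
  proof (rule Gcd_greatest)
    fix b assume "b \<in> q ` {0..n}"
    then obtain i where i: "i \<le> n" "b = q i" by auto
    show "gcd (dgcd n q j) (q j) dvd b"
    proof (cases "i = j")
      case True
      then show ?thesis using i by simp
    next
      case False
      then have "dgcd n q j dvd q i" using d_dvd[of i j] i by auto
      then show ?thesis using i by (metis dvd_trans gcd_dvd1)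
    qed
  qed
  then show ?thesis unfolding G1 by (simp add: coprime_iff_gcd_eq_1)
qed

lemma a_dvd: assumes "j \<le> n" shows "acoef n q j dvd q j"
  unfolding acoef_def
proof (rule Lcm_least)
  fix b assume "b \<in> dgcd n q ` ({0..n} - {j})"
  then obtain k where k: "k \<in> {0..n} - {j}" "b = dgcd n q k" by blast
  then show "b dvd q j" using d_dvd[of j k] assms by simp
qed

lemma a_prod: assumes j: "j \<le> n"
  shows "dgcd n q j * acoef n q j = Lcm (dgcd n q ` {0..n})"
proof -
  define A where "A = dgcd n q ` ({0..n} - {j})"
  have fin: "finite A" unfolding A_def by simp
  have "(if j = 0 then 1 else 0) \<in> {0..n} - {j}" using n0 by auto
  then have ne: "A \<noteq> {}" unfolding A_def by blast
  have cop: "coprime a b" if ab: "a \<in> A" "b \<in> A" "a \<noteq> b" for a b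
  proof -
    obtain x y where xy: "x \<in> {0..n} - {j}" "y \<in> {0..n} - {j}" "a = dgcd n q x" "b = dgcd n q y"
      using ab(1,2) unfolding A_def by blast
    then have "x \<noteq> y" using ab(3) by blast
    then show ?thesis using d_cop[of x y] xy by simp
  qed
  have aA: "acoef n q j = \<Prod>A" unfolding acoef_def A_def[symmetric]
    using Lcm_coprime[OF fin ne cop] by simp
  have "coprime (dgcd n q j) (\<Prod>A)"
  proof (rule prod_coprime_right)
    fix b assume "b \<in> A"
    then obtain k where k: "k \<in> {0..n} - {j}" "b = dgcd n q k" unfolding A_def by blast
    then show "coprime (dgcd n q j) b" using d_cop[of j k] j by auto
  qed
  then have "lcm (dgcd n q j) (acoef n q j) = dgcd n q j * acoef n q j"
    unfolding aA by (simp add: lcm_coprime)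
  moreover have "dgcd n q ` {0..n} = insert (dgcd n q j) A" unfolding A_def using j by auto
  ultimately show ?thesis unfolding acoef_def A_def by simp
qed

lemma red_rat: assumes j: "j \<le> n"
  shows "of_nat (reduction n q j) / of_nat (dgcd n q j) = (of_nat (q j) / of_nat (Lcm (dgcd n q ` {0..n})) :: rat)"
proof -
  have dp: "dgcd n q j > 0" by (rule d_pos[OF j])
  have ap: "acoef n q j > 0" using a_dvd[OF j] qp[OF j] by (metis dvd_0_left_iff gr0I)
  obtain r where r: "q j = acoef n q j * r" using a_dvd[OF j] by blast
  have red: "reduction n q j = r" unfolding reduction_def r using ap by simp
  show ?thesis unfolding red a_prod[OF j, symmetric] r using dp ap by (simp add: field_simps)
qed

end



lemma smult_eq_self: fixes w :: "rat vec"
  assumes "a \<cdot>\<^sub>v w = w" "w \<noteq> 0\<^sub>v (dim_vec w)" shows "a = 1"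
proof -
  obtain i where i: "i < dim_vec w" "w $ i \<noteq> 0"
    using assms(2) by (metis eq_vecI index_zero_vec)
  have "a * w $ i = w $ i" using assms(1) i by (metis index_smult_vec(1))
  then show ?thesis using i by simp
qed

lemma int_span_cong: "(\<And>j. j < m \<Longrightarrow> u j = u' j) \<Longrightarrow> int_span d u m = int_span d u' m"
  unfolding int_span_def using lincomb_cong[of m _ _ u u' d] by auto

context
  fixes n :: nat and q :: "nat \<Rightarrow> nat" and v :: "nat \<Rightarrow> rat vec"
  assumes Q: "weights_vector n q"
    and dim: "\<forall>j\<le>n. v j \<in> carrier_vec n"
    and gen: "generates_Qn n v (Suc n)"
    and rel: "lincomb n (\<lambda>j. of_nat (q j)) v (Suc n) = 0\<^sub>v n"
    and n0: "0 < n"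
begin

abbreviation L where "L \<equiv> int_span n v (Suc n)"
definition W where "W j = (1 / of_nat (dgcd n q j)) \<cdot>\<^sub>v v j"

lemma Dpos: "j \<le> n \<Longrightarrow> dgcd n q j > 0" by (rule d_pos[OF Q n0])

lemma v_single: "j \<le> n \<Longrightarrow> lincomb n (\<lambda>k. if k = j then 1 else 0) v (Suc n) = v j"
  using dim by (intro lincomb_single) auto

lemma vW: assumes j: "j \<le> n" shows "v j = of_nat (dgcd n q j) \<cdot>\<^sub>v W j"
  unfolding W_def using Dpos[OF j] by (simp add: smult_smult_assoc)

lemma W_in_L: assumes j: "j \<le> n" shows "W j \<in> L"
proof -
  define D where "D = dgcd n q j"
  have Dp: "D > 0" using Dpos[OF j] by (simp add: D_def)
  have "coprime (int D) (int (q j))" using dq_cop[OF Q n0 j] by (simp add: D_def)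
  then have "gcd (int D) (int (q j)) = 1" by (simp only: coprime_iff_gcd_eq_1)
  then obtain a b where ab: "a * int D + b * int (q j) = 1" using bezout_int by metis
  define c where "c k = (if k = j then a else - b * (int (q k) div int D))" for k
  have "of_nat D \<cdot>\<^sub>v lincomb n (\<lambda>k. of_int (c k)) v (Suc n)
      = lincomb n (\<lambda>k. (if k = j then 1 else 0) - of_int b * of_nat (q k)) v (Suc n)"
    unfolding lincomb_smult
  proof (rule lincomb_cong)
    fix k assume k: "k < Suc n"
    show "of_nat D * of_int (c k) = (if k = j then 1 else 0) - of_int b * (of_nat (q k) :: rat)"
    proof (cases "k = j")
      case True
      have "of_int (a * int D + b * int (q j)) = (1::rat)" using ab by simp
      then show ?thesis using True by (simp add: c_def algebra_simps)
    next
      case False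
      have "D dvd q k" using d_dvd[OF Q n0, of k j] k False by (simp add: D_def)
      then obtain r where r: "q k = D * r" by blast
      then show ?thesis using False Dp by (simp add: c_def)
    qed
  qed simp
  also have "\<dots> = lincomb n (\<lambda>k. if k = j then 1 else 0) v (Suc n) - of_int b \<cdot>\<^sub>v lincomb n (\<lambda>k. of_nat (q k)) v (Suc n)"
    by (simp add: lincomb_smult lincomb_diff)
  also have "\<dots> = v j" unfolding v_single[OF j] rel using dim j by (intro eq_vecI) auto
  finally have e: "of_nat D \<cdot>\<^sub>v lincomb n (\<lambda>k. of_int (c k)) v (Suc n) = v j" .
  have "W j = lincomb n (\<lambda>k. of_int (c k)) v (Suc n)"
    unfolding W_def D_def[symmetric] e[symmetric] using Dp by (simp add: smult_smult_assoc)
  then show ?thesis unfolding int_span_def by blast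
qed

lemma W_nonzero: assumes j: "j \<le> n" shows "W j \<noteq> 0\<^sub>v n"
proof
  assume "W j = 0\<^sub>v n"
  then have "v j = 0\<^sub>v n" unfolding vW[OF j] by (intro eq_vecI) auto
  then have "lincomb n (\<lambda>k. if k = j then 1 else 0) v (Suc n) = 0\<^sub>v n" using v_single[OF j] by simp
  from KQ[OF Q dim gen rel this] obtain s :: rat where s: "\<And>k. k \<le> n \<Longrightarrow> (if k = j then 1 else 0) = s * of_nat (q k)" by auto
  define k where "k = (if j = 0 then 1 else 0::nat)"
  have k: "k \<le> n" "k \<noteq> j" using n0 by (auto simp: k_def)
  from s[OF k(1)] k qpos[OF Q dim gen rel k(1)] have "s = 0" by simp
  with s[OF j] show False by simp
qed

lemma W_ray: assumes j: "j \<le> n" shows "ray_generator L (v j) (W j)"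
  unfolding ray_generator_def
proof (intro equalityI subsetI)
  define D where "D = dgcd n q j"
  have Dp: "D > 0" using Dpos[OF j] by (simp add: D_def)
  fix x assume "x \<in> {x. (\<exists>t\<ge>0. x = t \<cdot>\<^sub>v v j) \<and> x \<in> L}"
  then obtain t c where t: "t \<ge> 0" "x = t \<cdot>\<^sub>v v j" and c: "x = lincomb n (\<lambda>k. of_int (c k)) v (Suc n)"
    unfolding int_span_def by blast
  have "lincomb n (\<lambda>k. of_int (c k) - t * (if k = j then 1 else 0)) v (Suc n) = x - t \<cdot>\<^sub>v v j"
    unfolding c v_single[OF j, symmetric] by (simp add: lincomb_smult lincomb_diff)
  also have "\<dots> = 0\<^sub>v n" unfolding t(2) using dim j by (intro eq_vecI) auto
  finally have "lincomb n (\<lambda>k. of_int (c k) - t * (if k = j then 1 else 0)) v (Suc n) = 0\<^sub>v n" .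
  from KQ[OF Q dim gen rel this] obtain s :: rat
    where s: "\<And>k. k \<le> n \<Longrightarrow> of_int (c k) - t * (if k = j then 1 else 0) = s * of_nat (q k)"
    by blast
  have "\<forall>k\<in>{0..n} - {j}. s * of_nat (q k) \<in> \<int>"
  proof
    fix k assume k: "k \<in> {0..n} - {j}"
    then have "s * of_nat (q k) = of_int (c k)" using s[of k] by auto
    then show "s * of_nat (q k) \<in> \<int>" by simp
  qed
  from Ints_mult_Gcd[OF this] have sD: "s * of_nat D \<in> \<int>" unfolding D_def dgcd_def .
  have "t * of_nat D = of_int (c j) * of_nat D - (s * of_nat D) * of_nat (q j)"
    using s[OF j] by (simp add: algebra_simps)
  also have "\<dots> \<in> \<int>" by (rule Ints_diff[OF Ints_mult[OF Ints_of_int Ints_of_nat] Ints_mult[OF sD Ints_of_nat]])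
  finally obtain z where z: "t * of_nat D = of_int z" by (auto elim: Ints_cases)
  have "t * of_nat D \<ge> 0" using t by simp
  then have "z \<ge> 0" using z by simp
  then have zn: "t * of_nat D = of_nat (nat z)" using z by simp
  have "x = of_nat (nat z) \<cdot>\<^sub>v W j" unfolding W_def D_def[symmetric] zn[symmetric] t(2)
    using Dp by (simp add: smult_smult_assoc)
  then show "x \<in> {of_nat k \<cdot>\<^sub>v W j | k. True}" by blast
next
  define D where "D = dgcd n q j"
  have Dp: "D > 0" using Dpos[OF j] by (simp add: D_def)
  fix x assume "x \<in> {of_nat k \<cdot>\<^sub>v W j | k. True}"
  then obtain m where x: "x = of_nat m \<cdot>\<^sub>v W j" by blast
  have xe: "x = (of_nat m / of_nat D) \<cdot>\<^sub>v v j" unfolding x W_def D_def[symmetric] by (simp add: smult_smult_assoc)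
  have nn: "of_nat m / of_nat D \<ge> (0::rat)" by simp
  obtain c where "W j = lincomb n (\<lambda>k. of_int (c k)) v (Suc n)" using W_in_L[OF j] unfolding int_span_def by blast
  then have xm: "x = lincomb n (\<lambda>k. of_int (int m * c k)) v (Suc n)" unfolding x by (simp add: lincomb_smult)
  have "x \<in> L" unfolding int_span_def
    by (rule CollectI, rule exI[of _ "\<lambda>k. int m * c k"], simp add: xm)
  then show "x \<in> {x. (\<exists>t\<ge>0. x = t \<cdot>\<^sub>v v j) \<and> x \<in> L}" using xe nn by blast
qed

lemma ray_unique: assumes j: "j \<le> n" and r: "ray_generator L (v j) w" shows "w = W j"
proof -
  have eq: "{of_nat k \<cdot>\<^sub>v w | k. True} = {of_nat k \<cdot>\<^sub>v W j | k::nat. True}"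
    using r W_ray[OF j] unfolding ray_generator_def by simp
  have "w \<in> {of_nat k \<cdot>\<^sub>v w | k::nat. True}" by (intro CollectI exI[of _ 1]) simp
  then obtain m1 where m1: "w = of_nat m1 \<cdot>\<^sub>v W j" using eq by auto
  have "W j \<in> {of_nat k \<cdot>\<^sub>v W j | k::nat. True}" by (intro CollectI exI[of _ 1]) simp
  then obtain m2 where m2: "W j = of_nat m2 \<cdot>\<^sub>v w" using eq by auto
  have "W j = of_nat m2 \<cdot>\<^sub>v (of_nat m1 \<cdot>\<^sub>v W j)" using m2 unfolding m1 .
  then have "(of_nat m2 * of_nat m1) \<cdot>\<^sub>v W j = W j" by (simp add: smult_smult_assoc)
  moreover have "dim_vec (v j) = n" using dim j by auto
  then have "W j \<noteq> 0\<^sub>v (dim_vec (W j))" using W_nonzero[OF j] by (simp add: W_def)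
  ultimately have "of_nat m2 * of_nat m1 = (1::rat)" by (rule smult_eq_self)
  then have "m1 = 1" by (metis of_nat_1 of_nat_eq_iff of_nat_mult nat_mult_eq_1_iff)
  then show ?thesis using m1 by simp
qed

end



lemma vec0: "dim_vec (x :: 'a :: zero vec) = 0 \<Longrightarrow> x = 0\<^sub>v 0" by (intro eq_vecI) auto

lemma int_span_0: "int_span 0 u m = {0\<^sub>v 0}"
proof -
  have l: "lincomb 0 (\<lambda>j. of_int (0::int)) u m = 0\<^sub>v 0" by (rule vec0) simp
  have "0\<^sub>v 0 \<in> int_span 0 u m" unfolding int_span_def
    by (rule CollectI, rule exI[of _ "\<lambda>j. 0::int"], simp only: l)
  moreover have "int_span 0 u m \<subseteq> {0\<^sub>v 0}" unfolding int_span_def by (auto intro: vec0)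
  ultimately show ?thesis by blast
qed

context
  fixes n :: nat and q :: "nat \<Rightarrow> nat" and v :: "nat \<Rightarrow> rat vec"
  assumes Q: "weights_vector n q"
    and dim: "\<forall>j\<le>n. v j \<in> carrier_vec n"
    and gen: "generates_Qn n v (Suc n)"
    and rel: "lincomb n (\<lambda>j. of_nat (q j)) v (Suc n) = 0\<^sub>v n"
    and n0: "0 < n"
begin

lemma lincomb_W: "lincomb n c (W n q v) (Suc n) = lincomb n (\<lambda>j. c j * (1 / of_nat (dgcd n q j))) v (Suc n)"
proof -
  have "lincomb n c (W n q v) (Suc n) = lincomb n c (\<lambda>j. (1 / of_nat (dgcd n q j)) \<cdot>\<^sub>v v j) (Suc n)"
    by (rule lincomb_cong) (auto simp: W_def[OF Q dim gen rel n0])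
  also have "\<dots> = lincomb n (\<lambda>j. c j * (1 / of_nat (dgcd n q j))) v (Suc n)"
    by (rule lincomb_scaled) (use dim in auto)
  finally show ?thesis .
qed

lemma part_c_pos:
  assumes nv: "\<forall>j\<le>n. ray_generator (int_span n v (Suc n)) (v j) (nv j)"
  shows "(\<forall>j\<le>n. v j = of_nat (dgcd n q j) \<cdot>\<^sub>v nv j)
          \<and> int_span n nv (Suc n) = int_span n v (Suc n)
          \<and> generates_Qn n nv (Suc n)
          \<and> lincomb n (\<lambda>j. of_nat (reduction n q j)) nv (Suc n) = 0\<^sub>v n"
proof -
  have nvW: "nv j = W n q v j" if "j \<le> n" for j
    using ray_unique[OF Q dim gen rel n0 that] nv that by auto
  have lnv: "lincomb n c nv (Suc n) = lincomb n c (W n q v) (Suc n)" for c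
    by (rule lincomb_cong) (auto simp: nvW)
  have Dp: "\<And>j. j \<le> n \<Longrightarrow> dgcd n q j > 0" by (rule Dpos[OF Q dim gen rel n0])
  have c1: "\<forall>j\<le>n. v j = of_nat (dgcd n q j) \<cdot>\<^sub>v nv j"
    using vW[OF Q dim gen rel n0] nvW by auto
  have "\<forall>j. \<exists>b. j \<le> n \<longrightarrow> W n q v j = lincomb n (\<lambda>k. of_int (b k)) v (Suc n)"
    using W_in_L[OF Q dim gen rel n0] unfolding int_span_def by blast
  then obtain b where b: "\<And>j. j \<le> n \<Longrightarrow> W n q v j = lincomb n (\<lambda>k. of_int (b j k)) v (Suc n)" by metis
  have c2: "int_span n nv (Suc n) = int_span n v (Suc n)"
  proof (intro equalityI subsetI)
    fix x assume "x \<in> int_span n nv (Suc n)"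
    then obtain c where x: "x = lincomb n (\<lambda>j. of_int (c j)) nv (Suc n)" unfolding int_span_def by blast
    have "x = lincomb n (\<lambda>j. of_int (c j)) (\<lambda>j. lincomb n (\<lambda>k. of_int (b j k)) v (Suc n)) (Suc n)"
      unfolding x lnv by (rule lincomb_cong) (auto simp: b)
    also have "\<dots> = lincomb n (\<lambda>k. of_int (\<Sum>j<Suc n. c j * b j k)) v (Suc n)"
      unfolding lincomb_lincomb by (rule lincomb_cong) (auto simp: of_int_sum)
    finally have xe: "x = lincomb n (\<lambda>k. of_int (\<Sum>j<Suc n. c j * b j k)) v (Suc n)" .
    show "x \<in> int_span n v (Suc n)" unfolding int_span_def
      by (rule CollectI, rule exI[of _ "\<lambda>k. \<Sum>j<Suc n. c j * b j k"], simp only: xe)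
  next
    fix x assume "x \<in> int_span n v (Suc n)"
    then obtain c where x: "x = lincomb n (\<lambda>j. of_int (c j)) v (Suc n)" unfolding int_span_def by blast
    have "x = lincomb n (\<lambda>j. of_int (c j * int (dgcd n q j))) nv (Suc n)"
      unfolding x lnv lincomb_W by (rule lincomb_cong) (use Dp in auto)
    then show "x \<in> int_span n nv (Suc n)" unfolding int_span_def
      by (intro CollectI exI[of _ "\<lambda>j. c j * int (dgcd n q j)"]) simp
  qed
  have c3: "generates_Qn n nv (Suc n)"
    unfolding generates_Qn_def
  proof
    fix x :: "rat vec" assume "x \<in> carrier_vec n"
    with gen obtain c where x: "x = lincomb n c v (Suc n)" unfolding generates_Qn_def by blast
    have "x = lincomb n (\<lambda>j. c j * of_nat (dgcd n q j)) nv (Suc n)"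
      unfolding x lnv lincomb_W by (rule lincomb_cong) (use Dp in auto)
    then show "\<exists>c. x = lincomb n c nv (Suc n)" by blast
  qed
  define P where "P = Lcm (dgcd n q ` {0..n})"
  have "lincomb n (\<lambda>j. of_nat (reduction n q j)) nv (Suc n)
      = lincomb n (\<lambda>j. (1 / of_nat P) * of_nat (q j)) v (Suc n)"
    unfolding lnv lincomb_W
  proof (rule lincomb_cong)
    fix j assume "j < Suc n"
    then have j: "j \<le> n" by simp
    show "of_nat (reduction n q j) * (1 / of_nat (dgcd n q j)) = 1 / of_nat P * (of_nat (q j) :: rat)"
      using red_rat[OF Q n0 j] by (simp add: P_def)
  qed simp
  also have "\<dots> = 0\<^sub>v n" unfolding lincomb_smult[symmetric] rel by (intro eq_vecI) auto
  finally have c4: "lincomb n (\<lambda>j. of_nat (reduction n q j)) nv (Suc n) = 0\<^sub>v n" .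
  show ?thesis using c1 c2 c3 c4 by blast
qed

end

theorem mainTheorem3:
  fixes n :: nat and q :: "nat \<Rightarrow> nat" and v :: "nat \<Rightarrow> rat vec"
  assumes Q: "weights_vector n q"
    and dim: "\<forall>j\<le>n. v j \<in> carrier_vec n"
    and gen: "generates_Qn n v (Suc n)"
    and rel: "lincomb n (\<lambda>j. of_nat (q j)) v (Suc n) = 0\<^sub>v n"
  shows
    "lattice_index (int_span n v (Suc n)) (int_span n (\<lambda>j. of_nat (q j) \<cdot>\<^sub>v v j) (Suc n))
        = (\<Prod>j\<le>n. q j)
     \<and> (\<forall>e V. is_lattice_basis n (int_span n v (Suc n)) e \<and>
          (\<forall>j\<le>n. v j = lincomb n (\<lambda>i. of_int (V i j)) e n) \<longrightarrow>
          (\<exists>\<epsilon>\<in>{0,1::nat}. \<forall>j\<le>n. det (del_col n V j) = (-1) ^ (\<epsilon> + j) * int (q j)))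
     \<and> (\<forall>j\<le>n. \<exists>w. ray_generator (int_span n v (Suc n)) (v j) w)
     \<and> (\<forall>nv. (\<forall>j\<le>n. ray_generator (int_span n v (Suc n)) (v j) (nv j)) \<longrightarrow>
          (\<forall>j\<le>n. v j = of_nat (dgcd n q j) \<cdot>\<^sub>v nv j)
          \<and> int_span n nv (Suc n) = int_span n v (Suc n)
          \<and> generates_Qn n nv (Suc n)
          \<and> lincomb n (\<lambda>j. of_nat (reduction n q j)) nv (Suc n) = 0\<^sub>v n)"
proof -
  have A: "lattice_index (int_span n v (Suc n)) (int_span n (\<lambda>j. of_nat (q j) \<cdot>\<^sub>v v j) (Suc n))
        = (\<Prod>j\<le>n. q j)" by (rule part_a[OF Q dim gen rel])
  have B: "\<forall>e V. is_lattice_basis n (int_span n v (Suc n)) e \<and>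
          (\<forall>j\<le>n. v j = lincomb n (\<lambda>i. of_int (V i j)) e n) \<longrightarrow>
          (\<exists>\<epsilon>\<in>{0,1::nat}. \<forall>j\<le>n. det (del_col n V j) = (-1) ^ (\<epsilon> + j) * int (q j))"
    using part_b[OF Q dim gen rel] by blast
  show ?thesis
  proof (cases "n = 0")
    case False
    then have n0: "0 < n" by simp
    have C: "\<forall>j\<le>n. \<exists>w. ray_generator (int_span n v (Suc n)) (v j) w"
      using W_ray[OF Q dim gen rel n0] by blast
    show ?thesis using A B C part_c_pos[OF Q dim gen rel n0] by blast
  next
    case True
    have L0: "int_span n u m = {0\<^sub>v 0}" for u m unfolding True by (rule int_span_0)
    have v0: "v 0 = 0\<^sub>v 0" using dim True by (auto intro: vec0)
    have ray0: "ray_generator (int_span n v (Suc n)) (v 0) w \<longleftrightarrow> w = 0\<^sub>v 0" for w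
    proof
      assume r: "ray_generator (int_span n v (Suc n)) (v 0) w"
      have "w \<in> {of_nat k \<cdot>\<^sub>v w | k::nat. True}" by (intro CollectI exI[of _ 1]) simp
      then have "w \<in> int_span n v (Suc n)" using r unfolding ray_generator_def by blast
      then show "w = 0\<^sub>v 0" unfolding L0 by simp
    next
      assume w: "w = 0\<^sub>v 0"
      have "{x. (\<exists>t::rat. t \<ge> 0 \<and> x = t \<cdot>\<^sub>v v 0) \<and> x \<in> int_span n v (Suc n)} = {0\<^sub>v 0}"
        unfolding L0 v0 by (auto intro!: vec0 exI[of _ 0])
      moreover have "{of_nat k \<cdot>\<^sub>v w | k::nat. True} = {0\<^sub>v 0}"
        unfolding w by (auto intro!: vec0 exI[of _ "0::nat"])
      ultimately show "ray_generator (int_span n v (Suc n)) (v 0) w" unfolding ray_generator_def by simp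
    qed
    have C: "\<forall>j\<le>n. \<exists>w. ray_generator (int_span n v (Suc n)) (v j) w"
      using ray0 True by auto
    have D: "(\<forall>j\<le>n. v j = of_nat (dgcd n q j) \<cdot>\<^sub>v nv j)
          \<and> int_span n nv (Suc n) = int_span n v (Suc n)
          \<and> generates_Qn n nv (Suc n)
          \<and> lincomb n (\<lambda>j. of_nat (reduction n q j)) nv (Suc n) = 0\<^sub>v n"
      if nv: "\<forall>j\<le>n. ray_generator (int_span n v (Suc n)) (v j) (nv j)" for nv
    proof -
      have nv0: "nv 0 = 0\<^sub>v 0" using nv ray0 True by auto
      have "v 0 = of_nat (dgcd n q 0) \<cdot>\<^sub>v nv 0" unfolding v0 nv0 by (rule vec0[symmetric]) simp
      then have "\<forall>j\<le>n. v j = of_nat (dgcd n q j) \<cdot>\<^sub>v nv j" using True by simp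
      moreover have "int_span n nv (Suc n) = int_span n v (Suc n)" unfolding L0 ..
      moreover have "generates_Qn n nv (Suc n)" unfolding generates_Qn_def True
      proof
        fix x :: "rat vec" assume "x \<in> carrier_vec 0"
        then have "x = lincomb 0 (\<lambda>_. 0) nv (Suc 0)"
          using vec0[of x] vec0[of "lincomb 0 (\<lambda>_. 0) nv (Suc 0)"] by auto
        then show "\<exists>c. x = lincomb 0 c nv (Suc 0)" by blast
      qed
      moreover have "lincomb n (\<lambda>j. of_nat (reduction n q j)) nv (Suc n) = 0\<^sub>v n"
        unfolding True by (rule vec0) simp
      ultimately show ?thesis by blast
    qed
    show ?thesis using A B C D by blast
  qed
qed



end
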